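(* Let $p$ be a prime, $q=p^m$, and $f:\mathbb{F}_q\to\mathbb{F}_p$ any function. The following are equivalent: (i) $f(ax)=f(x)$ for all $(a,x)\in\mathbb{F}_p^*\times\mathbb{F}_q$; (ii) $W_f(a\beta)=W_f(\beta)$ for all $(a,\beta)\in\mathbb{F}_p^*\times\mathbb{F}_q$; (iii) $aD_{f,i}=D_{f,i}$ for all $(a,i)\in\mathbb{F}_p^*\times\mathbb{F}_p$; (iv) $\chi_\beta(D_{f,i})$ is a rational integer for all $(i,\beta)\in\mathbb{F}_p\times\mathbb{F}_q$.
   Context: $\mathrm{Tr}$ is the absolute trace $\mathbb{F}_q\to\mathbb{F}_p$, $\zeta_p=e^{2\pi\sqrt{-1}/p}$, $W_f(\beta)=\sum_{x\in\mathbb{F}_q}\zeta_p^{f(x)-\mathrm{Tr}(\beta x)}$, $D_{f,i}=\{x\in\mathbb{F}_q:f(x)=i\}$, $aD=\{ad:d\in D\}$, and $\chi_\beta(D)=\sum_{\alpha\in D}\zeta_p^{\mathrm{Tr}(\beta\alpha)}$ for $D\subseteq\mathbb{F}_q$. *)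

theory Defs
  imports Complex_Main "Berlekamp_Zassenhaus.Finite_Field"
begin

text \<open>Setting: F_p is the type 'p mod_ring (with 'p of prime cardinality p),
  F_q is a finite field type 'q of characteristic p (hence q = CARD('q) = p^m).\<close>

definition emb :: "'p::prime_card mod_ring \<Rightarrow> 'q::{finite,field}" where
  "emb a = of_int (to_int_mod_ring a)"

definition ext_deg :: "'q::{finite,field} itself \<Rightarrow> nat" where
  "ext_deg (_ :: 'q itself) = (THE m. CARD('q) = CHAR('q) ^ m)"

definition abs_trace_q :: "'q::{finite,field} \<Rightarrow> 'q" where
  "abs_trace_q x = (\<Sum>i<ext_deg TYPE('q). x ^ (CHAR('q) ^ i))"

definition Tr :: "'q::{finite,field} \<Rightarrow> 'p::prime_card mod_ring" where
  "Tr x = (THE b. emb b = abs_trace_q x)"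

definition zeta_pow :: "'p::prime_card mod_ring \<Rightarrow> complex" where
  "zeta_pow b = exp (2 * of_real pi * \<i> * of_int (to_int_mod_ring b) / of_nat CARD('p))"

definition walsh :: "('q::{finite,field} \<Rightarrow> 'p::prime_card mod_ring) \<Rightarrow> 'q \<Rightarrow> complex" where
  "walsh f \<beta> = (\<Sum>x\<in>UNIV. zeta_pow (f x - Tr (\<beta> * x)))"

definition Dset :: "('q \<Rightarrow> 'p::prime_card mod_ring) \<Rightarrow> 'p mod_ring \<Rightarrow> 'q set" where
  "Dset f i = {x. f x = i}"

definition scale_set :: "'p::prime_card mod_ring \<Rightarrow> 'q::{finite,field} set \<Rightarrow> 'q set" where
  "scale_set a D = (\<lambda>d. emb a * d) ` D"

text \<open>chi_beta(D); the itself-argument fixes the prime field F_p = 'p mod_ring.\<close>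
definition chi :: "'p::prime_card itself \<Rightarrow> 'q::{finite,field} \<Rightarrow> 'q set \<Rightarrow> complex" where
  "chi (_ :: 'p itself) \<beta> D = (\<Sum>\<alpha>\<in>D. zeta_pow (Tr (\<beta> * \<alpha>) :: 'p mod_ring))"

end

theory Submission
  imports Defs "Berlekamp_Zassenhaus.Factor_Bound" "HOL-Analysis.Complex_Transcendental"
begin

definition cyc :: "nat \<Rightarrow> 'a::comm_ring_1 poly" where
  "cyc n = (\<Sum>k<n. monom 1 k)"

lemma coeff_cyc: "coeff (cyc n) j = (if j < n then 1 else 0)"
  unfolding cyc_def by (simp add: coeff_sum coeff_monom)

lemma poly_cyc: "poly (cyc n) x = (\<Sum>k<n. x ^ k)"
  unfolding cyc_def by (simp add: poly_sum poly_monom)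

lemma map_cyc: "map_poly (of_int :: int \<Rightarrow> 'a::comm_ring_1) (cyc n) = cyc n"
  unfolding cyc_def by (simp add: hom_distribs of_int_hom.map_poly_hom_monom)

lemma cyc_mult: "[:-1,1:] * cyc n = monom (1::'a::comm_ring_1) n - 1"
proof (induction n)
  case 0 then show ?case by (simp add: cyc_def)
next
  case (Suc n)
  have "[:-1,1:] * cyc (Suc n) = [:-1,1:] * cyc n + [:-1,1:] * monom (1::'a) n"
    by (simp add: cyc_def distrib_left)
  also have "[:-1,1:] * monom (1::'a) n = monom 1 (Suc n) - monom 1 n"
    by (simp add: monom_altdef algebra_simps)
  finally show ?case using Suc by simp
qed

lemma degree_cyc: assumes "n > 0" shows "degree (cyc n :: 'a::{comm_ring_1} poly) = n - 1"
proof (rule antisym)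
  show "degree (cyc n :: 'a poly) \<le> n - 1"
    by (rule degree_le) (use assms in \<open>auto simp: coeff_cyc\<close>)
  show "n - 1 \<le> degree (cyc n :: 'a poly)"
    by (rule le_degree) (use assms in \<open>auto simp: coeff_cyc\<close>)
qed

lemma cyc_mod_p:
  "(cyc CARD('p) :: 'p::prime_card mod_ring poly) = [:-1,1:] ^ (CARD('p) - 1)"
proof -
  let ?p = "CARD('p)"
  have pr: "prime ?p" by (rule prime_card)
  have ch: "CHAR('p mod_ring poly) = ?p" by simp
  have "[:-1,1:] = ([:0,1:] + (-1) :: 'p mod_ring poly)"
    by (auto simp: poly_eq_iff coeff_pCons split: nat.splits)
  then have "[:-1,1:] ^ ?p = ([:0,1:] + (-1) :: 'p mod_ring poly) ^ ?p"
    by simp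
  also have "\<dots> = [:0,1:] ^ ?p + (-1) ^ ?p"
    by (rule freshmans_dream) (use pr ch in auto)
  also have "(-1 :: 'p mod_ring poly) ^ ?p = - (1 ^ ?p)"
    by (rule minus_power_prime_CHAR) (use pr ch in auto)
  finally have "[:-1,1:] ^ ?p = monom (1::'p mod_ring) ?p - 1"
    by (simp add: monom_altdef)
  also have "\<dots> = [:-1,1:] * cyc ?p" by (rule cyc_mult[symmetric])
  finally have eq: "[:-1,1:] * [:-1,1:] ^ (?p - 1) = [:-1,1:] * (cyc ?p :: 'p mod_ring poly)"
    using pr by (metis power_eq_if prime_gt_0_nat not_gr0)
  have nz: "[:-1,1::'p mod_ring:] \<noteq> 0" by simp
  show ?thesis using mult_left_cancel[OF nz] eq by metis
qed

lemma cyc_int_irred: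
  fixes g h :: "int poly"
  assumes gh: "cyc CARD('p::prime_card) = g * h"
  shows "degree g = 0 \<or> degree h = 0"
proof (rule ccontr)
  assume "\<not> (degree g = 0 \<or> degree h = 0)"
  then have dg: "degree g > 0" and dh: "degree h > 0" by auto
  let ?p = "CARD('p)"
  let ?m = "map_poly (of_int :: int \<Rightarrow> 'p mod_ring)"
  have pr: "prime ?p" by (rule prime_card)
  have p2: "?p \<ge> 2" using prime_ge_2_nat[OF pr] .
  have c0: "cyc ?p \<noteq> (0::int poly)"
  proof
    assume "cyc ?p = (0::int poly)"
    then have "coeff (cyc ?p :: int poly) 0 = 0" by simp
    moreover have "coeff (cyc ?p :: int poly) 0 = 1" using p2 by (simp add: coeff_cyc)
    ultimately show False by simp
  qed
  have g0: "g \<noteq> 0" and h0: "h \<noteq> 0" using c0 gh by auto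
  have lc: "lead_coeff g * lead_coeff h = 1"
  proof -
    have "lead_coeff (cyc ?p :: int poly) = 1"
      using degree_cyc[of ?p, where 'a=int] p2 by (simp add: coeff_cyc)
    then show ?thesis using gh by (simp add: lead_coeff_mult)
  qed
  then have lg: "lead_coeff g = 1 \<or> lead_coeff g = -1"
    using zmult_eq_1_iff by blast
  from lc have lh: "lead_coeff h = 1 \<or> lead_coeff h = -1"
    using zmult_eq_1_iff[of "lead_coeff h" "lead_coeff g"] by (auto simp add: mult.commute)
  have dmg: "degree (?m g) = degree g"
    by (rule map_poly_degree_eq) (use lg in auto)
  have dmh: "degree (?m h) = degree h"
    by (rule map_poly_degree_eq) (use lh in auto)
  have dsum: "degree g + degree h = ?p - 1"
    using degree_mult_eq[OF g0 h0] gh degree_cyc[of ?p, where 'a=int] p2 by simp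
  have mgh: "?m g * ?m h = [:-1,1:] ^ (?p - 1)"
  proof -
    have "?m (cyc ?p) = ?m g * ?m h" using gh by (simp add: hom_distribs)
    moreover have "?m (cyc ?p) = cyc ?p" by (rule map_cyc)
    moreover have "(cyc ?p :: 'p mod_ring poly) = [:-1,1:] ^ (?p - 1)" by (rule cyc_mod_p)
    ultimately show ?thesis by simp
  qed
  have nz: "?m g * ?m h \<noteq> 0" unfolding mgh by simp
  have mg0: "?m g \<noteq> 0" and mh0: "?m h \<noteq> 0" using nz by auto
  have "order 1 (?m g) + order 1 (?m h) = ?p - 1"
    using order_mult[OF nz, of 1] mgh order_power_n_n[of "1::'p mod_ring" "?p - 1"] by simp
  moreover have "order 1 (?m g) \<le> degree g" using order_degree[OF mg0] dmg by simp
  moreover have "order 1 (?m h) \<le> degree h" using order_degree[OF mh0] dmh by simp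
  ultimately have "order 1 (?m g) = degree g" "order 1 (?m h) = degree h" using dsum by auto
  then have og: "order 1 (?m g) \<noteq> 0" and oh: "order 1 (?m h) \<noteq> 0" using dg dh by auto
  have "poly (?m g) 1 = 0" by (subst order_root) (use og in simp)
  moreover have "poly (?m h) 1 = 0" by (subst order_root) (use oh in simp)
  ultimately have "(of_int (poly g 1) :: 'p mod_ring) = 0" "(of_int (poly h 1) :: 'p mod_ring) = 0"
    by (simp_all only: of_int_hom.poly_map_poly_1)
  then have "int ?p dvd poly g 1" "int ?p dvd poly h 1"
    by (simp_all add: of_int_eq_0_iff_char_dvd)
  then have "int ?p * int ?p dvd poly g 1 * poly h 1" by (rule mult_dvd_mono)
  also have "poly g 1 * poly h 1 = int ?p"
    using arg_cong[OF gh, of "\<lambda>f. poly f 1"] by (simp add: poly_cyc)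
  finally have "int ?p * int ?p dvd int ?p * 1" by simp
  then have "int ?p dvd 1" using p2 by (subst (asm) dvd_mult_cancel_left) auto
  then show False using p2 by simp
qed


lemma cyc_rat_irred:
  fixes g h :: "rat poly"
  assumes gh: "cyc CARD('p::prime_card) = g * h"
  shows "degree g = 0 \<or> degree h = 0"
proof -
  have "of_int_poly (cyc CARD('p) :: int poly) = g * h" using gh map_cyc by metis
  from rat_to_int_factor[OF this] obtain g' h' :: "int poly" where
    "cyc CARD('p) = g' * h'" "degree g' = degree g" "degree h' = degree h" by blast
  with cyc_int_irred[of g' h'] show ?thesis by (metis (no_types))
qed

lemma map_cyc_rat: "map_poly (of_rat :: rat \<Rightarrow> 'a::field_char_0) (cyc n) = cyc n"
  by (simp add: poly_eq_iff coeff_map_poly coeff_cyc)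

interpretation of_rat_ch: map_poly_comm_ring_hom "of_rat :: rat \<Rightarrow> complex" ..

lemma cyc_LI:
  fixes a :: "nat \<Rightarrow> int" and z :: complex
  assumes zp: "z ^ CARD('p::prime_card) = 1" and z1: "z \<noteq> 1"
    and sum0: "(\<Sum>k<CARD('p). of_int (a k) * z ^ k) = 0"
  shows "\<forall>k<CARD('p). a k = a 0"
proof -
  let ?p = "CARD('p)"
  have p2: "?p \<ge> 2" using prime_ge_2_nat[OF prime_card] .
  define P :: "int poly" where "P = (\<Sum>k<?p. monom (a k) k)"
  define PQ :: "rat poly" where "PQ = of_int_poly P"
  define CQ :: "rat poly" where "CQ = cyc ?p"
  let ?c = "map_poly (of_rat :: rat \<Rightarrow> complex)"
  have coeffP: "coeff P k = a k" if "k < ?p" for k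
    unfolding P_def using that by (simp add: coeff_sum)
  have coeffPQ: "coeff PQ k = of_int (a k)" if "k < ?p" for k
    unfolding PQ_def using coeffP[OF that] by simp
  have degPQ: "degree PQ \<le> ?p - 1"
    by (rule degree_le) (auto simp: PQ_def P_def coeff_sum coeff_map_poly)
  have cP: "?c PQ = (\<Sum>k<?p. monom (of_int (a k)) k)"
  proof -
    have "?c PQ = of_int_poly P" by (simp add: poly_eq_iff coeff_map_poly PQ_def)
    also have "\<dots> = (\<Sum>k<?p. monom (of_int (a k)) k)"
      unfolding P_def by (simp add: hom_distribs of_int_hom.map_poly_hom_monom)
    finally show ?thesis .
  qed
  have hP: "poly (?c PQ) z = 0"
    unfolding cP using sum0 by (simp add: poly_sum poly_monom)
  have hC: "poly (?c CQ) z = 0"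
  proof -
    have "(z - 1) * (\<Sum>k<?p. z ^ k) = 0" using power_diff_1_eq[of z ?p] zp by simp
    then have "(\<Sum>k<?p. z ^ k) = 0" using z1 by simp
    then show ?thesis unfolding CQ_def map_cyc_rat poly_cyc .
  qed
  have CQ0: "CQ \<noteq> 0"
  proof
    assume "CQ = 0"
    then have "coeff CQ 0 = 0" by simp
    moreover have "coeff CQ 0 = 1" unfolding CQ_def using p2 by (simp add: coeff_cyc)
    ultimately show False by simp
  qed
  have degCQ: "degree CQ = ?p - 1" unfolding CQ_def using p2 by (simp add: degree_cyc)
  have coeffCQ: "coeff CQ k = 1" if "k < ?p" for k unfolding CQ_def using that by (simp add: coeff_cyc)
  show ?thesis
  proof (cases "PQ = 0")
    case True
    then show ?thesis using coeffPQ by (metis coeff_0 of_int_eq_0_iff p2 less_le_trans zero_less_numeral)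
  next
    case False
    define gg where "gg = gcd PQ CQ"
    obtain u v where uv: "u * PQ + v * CQ = gg"
      unfolding gg_def using bezout_coefficients_fst_snd by blast
    have hg: "poly (?c gg) z = 0"
      using arg_cong[OF uv, of "\<lambda>f. poly (?c f) z"] hP hC by (simp add: of_rat_ch.hom_mult of_rat_ch.hom_add)
    have gg0: "gg \<noteq> 0" unfolding gg_def using False by simp
    obtain h where h: "CQ = gg * h" unfolding gg_def by (metis gcd_dvd2 dvdE)
    have "degree gg = 0 \<or> degree h = 0" using h unfolding CQ_def by (rule cyc_rat_irred)
    moreover have "degree gg \<noteq> 0"
    proof
      assume "degree gg = 0"
      then obtain c where "gg = [:c:]" by (metis degree_eq_zeroE)
      with gg0 hg show False by simp
    qed
    ultimately have dh: "degree h = 0" by blast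
    have h0: "h \<noteq> 0" using h CQ0 by auto
    obtain c where c: "h = [:c:]" using dh by (metis degree_eq_zeroE)
    have c0: "c \<noteq> 0" using h0 c by simp
    have degg: "degree gg = ?p - 1" using h degCQ c c0 by simp
    obtain k where k: "PQ = gg * k" unfolding gg_def by (metis gcd_dvd1 dvdE)
    have k0: "k \<noteq> 0" using k False by auto
    have "degree PQ = degree gg + degree k" using k gg0 k0 by (simp add: degree_mult_eq)
    then have "degree k = 0" using degPQ degg p2 by linarith
    then obtain d where d: "k = [:d:]" by (metis degree_eq_zeroE)
    have "PQ = smult (d / c) CQ" using k d h c c0 by (simp add: field_simps)
    then have "of_int (a j) = d / c" if "j < ?p" for j
      using coeffPQ[OF that] coeffCQ[OF that] by simp
    then show ?thesis using p2 by (metis of_int_eq_iff neq0_conv not_numeral_le_zero le_zero_eq)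
  qed
qed

lemma emb_add:
  assumes char: "CHAR('q::{finite,field}) = CARD('p::prime_card)"
  shows "(emb (a + b :: 'p mod_ring) :: 'q) = emb a + emb b"
proof -
  have "(emb (a + b) :: 'q) = of_int ((to_int_mod_ring a + to_int_mod_ring b) mod int CHAR('q))"
    unfolding emb_def to_int_mod_ring_add char ..
  also have "\<dots> = emb a + emb b" unfolding of_int_mod_CHAR emb_def by simp
  finally show ?thesis .
qed

lemma emb_mult:
  assumes char: "CHAR('q::{finite,field}) = CARD('p::prime_card)"
  shows "(emb (a * b :: 'p mod_ring) :: 'q) = emb a * emb b"
proof -
  have "(emb (a * b) :: 'q) = of_int ((to_int_mod_ring a * to_int_mod_ring b) mod int CHAR('q))"
    unfolding emb_def to_int_mod_ring_mult char ..
  also have "\<dots> = emb a * emb b" unfolding of_int_mod_CHAR emb_def by simp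
  finally show ?thesis .
qed

lemma emb_0 [simp]: "emb 0 = 0"
  unfolding emb_def by simp

lemma emb_1 [simp]: "emb (1 :: 'p::prime_card mod_ring) = 1"
  unfolding emb_def by simp

lemma emb_uminus:
  assumes char: "CHAR('q::{finite,field}) = CARD('p::prime_card)"
  shows "(emb (- a :: 'p mod_ring) :: 'q) = - emb a"
  using emb_add[OF char, of a "-a"] by (simp add: eq_neg_iff_add_eq_0 add.commute)

lemma emb_inj:
  assumes char: "CHAR('q::{finite,field}) = CARD('p::prime_card)"
    and eq: "(emb a :: 'q) = emb (b :: 'p mod_ring)"
  shows "a = b"
proof -
  have "(of_int (to_int_mod_ring a - to_int_mod_ring b) :: 'q) = 0"
    using eq unfolding emb_def by simp
  then have "int CHAR('q) dvd to_int_mod_ring a - to_int_mod_ring b"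
    by (simp only: of_int_eq_0_iff_char_dvd)
  then have dv: "int CARD('p) dvd to_int_mod_ring a - to_int_mod_ring b"
    by (simp only: char)
  have ra: "to_int_mod_ring a \<in> {0..<int CARD('p)}" by (metis rangeI range_to_int_mod_ring)
  have rb: "to_int_mod_ring b \<in> {0..<int CARD('p)}" by (metis rangeI range_to_int_mod_ring)
  have "to_int_mod_ring a = to_int_mod_ring b"
  proof (rule ccontr)
    assume ne: "to_int_mod_ring a \<noteq> to_int_mod_ring b"
    then have "\<bar>to_int_mod_ring a - to_int_mod_ring b\<bar> < int CARD('p)" using ra rb by auto
    moreover have "int CARD('p) \<le> \<bar>to_int_mod_ring a - to_int_mod_ring b\<bar>"
      using dvd_imp_le_int[OF _ dv] ne by simp
    ultimately show False by simp
  qed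
  then show ?thesis by (metis of_int_mod_ring_to_int_mod_ring)
qed

lemma inj_emb:
  assumes char: "CHAR('q::{finite,field}) = CARD('p::prime_card)"
  shows "inj (emb :: 'p mod_ring \<Rightarrow> 'q)"
  using emb_inj[OF char] by (auto intro: injI)

lemma emb_eq_of_nat: "(emb a :: 'q::{finite,field}) = of_nat (nat (to_int_mod_ring (a :: 'p::prime_card mod_ring)))"
proof -
  have "to_int_mod_ring a \<in> {0..<int CARD('p)}" by (metis rangeI range_to_int_mod_ring)
  then have "to_int_mod_ring a \<ge> 0" by simp
  then show ?thesis unfolding emb_def by (metis of_int_of_nat_eq int_nat_eq)
qed

lemma emb_power:
  assumes char: "CHAR('q::{finite,field}) = CARD('p::prime_card)"
  shows "(emb (a ^ n :: 'p mod_ring) :: 'q) = emb a ^ n"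
  by (induction n) (simp_all add: emb_mult[OF char])

lemma emb_pow_p:
  assumes char: "CHAR('q::{finite,field}) = CARD('p::prime_card)"
  shows "(emb (a :: 'p mod_ring) :: 'q) ^ (CARD('p) ^ i) = emb a"
proof -
  have "a ^ (CARD('p) ^ i) = a"
    using finite_field_power_card_power_eq_same[of "CARD('p mod_ring) ^ i" i a] by simp
  then show ?thesis using emb_power[OF char, of a "CARD('p) ^ i"] by simp
qed

lemma emb_diff:
  assumes char: "CHAR('q::{finite,field}) = CARD('p::prime_card)"
  shows "(emb (a - b :: 'p mod_ring) :: 'q) = emb a - emb b"
  using emb_add[OF char, of a "-b"] emb_uminus[OF char, of b] by simp

definition addsub :: "'q::{finite,field} set \<Rightarrow> bool" where
  "addsub V \<longleftrightarrow> 0 \<in> V \<and> (\<forall>x\<in>V. \<forall>y\<in>V. x + y \<in> V)"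

lemma addsub_of_nat: "addsub V \<Longrightarrow> v \<in> V \<Longrightarrow> of_nat n * v \<in> V"
  by (induction n) (auto simp: addsub_def distrib_right)

lemma addsub_emb: "addsub V \<Longrightarrow> v \<in> V \<Longrightarrow> emb (a :: 'p::prime_card mod_ring) * v \<in> V"
  unfolding emb_eq_of_nat by (rule addsub_of_nat)

lemma addsub_step:
  assumes char: "CHAR('q::{finite,field}) = CARD('p::prime_card)"
    and V: "addsub (V :: 'q set)" and x: "x \<notin> V"
  shows "addsub ((\<lambda>(c :: 'p mod_ring, v). emb c * x + v) ` (UNIV \<times> V))"
    and "card ((\<lambda>(c :: 'p mod_ring, v). emb c * x + v) ` (UNIV \<times> V)) = CARD('p) * card V"
proof -
  let ?f = "\<lambda>(c :: 'p mod_ring, v). emb c * x + v"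
  show "addsub (?f ` (UNIV \<times> V))"
    unfolding addsub_def
  proof (intro conjI ballI)
    show "0 \<in> ?f ` (UNIV \<times> V)"
      using V unfolding addsub_def by (intro image_eqI[of _ _ "(0, 0)"]) auto
    fix a b assume a: "a \<in> ?f ` (UNIV \<times> V)" and b: "b \<in> ?f ` (UNIV \<times> V)"
    from a obtain c :: "'p mod_ring" and v where a': "a = emb c * x + v" "v \<in> V" by fastforce
    from b obtain d :: "'p mod_ring" and w where b': "b = emb d * x + w" "w \<in> V" by fastforce
    have "a + b = emb (c + d) * x + (v + w)"
      using a' b' by (simp add: emb_add[OF char] algebra_simps)
    moreover have "v + w \<in> V" using V a' b' unfolding addsub_def by auto
    ultimately show "a + b \<in> ?f ` (UNIV \<times> V)" by (intro image_eqI[of _ _ "(c + d, v + w)"]) auto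
  qed
  have "inj_on ?f (UNIV \<times> V)"
  proof (rule inj_onI, clarify)
    fix c :: "'p mod_ring" and v and d :: "'p mod_ring" and w assume v: "v \<in> V" and w: "w \<in> V" and eq: "emb c * x + v = emb d * x + w"
    have neg: "emb (-1 :: 'p mod_ring) * v = - v" by (simp add: emb_uminus[OF char])
    have "emb (c - d) * x = w + emb (-1 :: 'p mod_ring) * v"
      using eq by (simp add: emb_uminus[OF char] emb_diff[OF char] algebra_simps)
    moreover have "w + emb (-1 :: 'p mod_ring) * v \<in> V"
      using V v w addsub_emb[OF V v] unfolding addsub_def by blast
    ultimately have inV: "emb (c - d) * x \<in> V" by simp
    show "c = d \<and> v = w"
    proof (cases "c = d")
      case True then show ?thesis using eq by simp
    next
      case False
      have "emb (inverse (c - d)) * (emb (c - d) * x) = x"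
        using False by (simp add: mult.assoc[symmetric] emb_mult[OF char, symmetric])
      moreover have "emb (inverse (c - d)) * (emb (c - d) * x) \<in> V" by (rule addsub_emb[OF V inV])
      ultimately show ?thesis using x by metis
    qed
  qed
  then have "card (?f ` (UNIV \<times> V)) = card (UNIV \<times> V :: ('p mod_ring \<times> 'q) set)"
    by (rule card_image)
  also have "\<dots> = CARD('p) * card V" by (simp add: card_cartesian_product)
  finally show "card (?f ` (UNIV \<times> V)) = CARD('p) * card V" .
qed

lemma card_field_power:
  assumes char: "CHAR('q::{finite,field}) = CARD('p::prime_card)"
  shows "\<exists>m. CARD('q) = CARD('p) ^ m"
proof -
  let ?p = "CARD('p)"
  have p2: "?p \<ge> 2" using prime_ge_2_nat[OF prime_card] .
  define S where "S = {k. \<exists>V::'q set. addsub V \<and> card V = ?p ^ k}"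
  have "0 \<in> S" unfolding S_def addsub_def by (intro CollectI exI[of _ "{0}"]) auto
  have bnd: "k < CARD('q)" if "k \<in> S" for k
  proof -
    from that obtain V :: "'q set" where "card V = ?p ^ k" unfolding S_def by blast
    moreover have "card V \<le> CARD('q)" by (rule card_mono) auto
    moreover have "k < ?p ^ k"
    proof -
      have "(2::nat) ^ k \<le> ?p ^ k" using p2 by (simp add: power_mono)
      then show ?thesis using less_exp[of k] by linarith
    qed
    ultimately show ?thesis by linarith
  qed
  have finS: "finite S" using bnd by (meson finite_nat_set_iff_bounded)
  define k where "k = Max S"
  have "k \<in> S" unfolding k_def using finS \<open>0 \<in> S\<close> by (intro Max_in) auto
  then obtain V :: "'q set" where V: "addsub V" "card V = ?p ^ k" unfolding S_def by blast
  have "V = UNIV"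
  proof (rule ccontr)
    assume "V \<noteq> UNIV"
    then obtain x where x: "x \<notin> V" by auto
    from addsub_step[OF char V(1) x] V(2)
    have "Suc k \<in> S" unfolding S_def by (intro CollectI exI) (auto simp: power_Suc)
    then have "Suc k \<le> k" unfolding k_def using finS by (intro Max_ge)
    then show False by simp
  qed
  then show ?thesis using V by auto
qed

lemma ext_deg_eq:
  assumes char: "CHAR('q::{finite,field}) = CARD('p::prime_card)"
  shows "CARD('q) = CARD('p) ^ ext_deg TYPE('q)"
proof -
  have p2: "CARD('p) > 1" using prime_ge_2_nat[OF prime_card[where 'a='p]] by simp
  obtain m where m: "CARD('q) = CARD('p) ^ m" using card_field_power[OF char] by blast
  have "\<exists>!m. CARD('q) = CHAR('q) ^ m"
    using m p2 unfolding char by (auto simp: power_inject_exp)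
  then have "CARD('q) = CHAR('q) ^ (THE m. CARD('q) = CHAR('q) ^ m)" by (rule theI')
  then show ?thesis unfolding ext_deg_def char .
qed

lemma ext_deg_pos:
  assumes char: "CHAR('q::{finite,field}) = CARD('p::prime_card)"
  shows "ext_deg TYPE('q) > 0"
proof (rule ccontr)
  assume "\<not> ext_deg TYPE('q) > 0"
  then have "CARD('q) = 1" using ext_deg_eq[OF char] by simp
  moreover have "card {0::'q, 1} \<le> CARD('q)" by (rule card_mono) auto
  ultimately show False by simp
qed

lemma pow_card_same:
  fixes x :: "'a :: {finite, field}"
  shows "x ^ CARD('a) = x"
proof (cases "x = 0")
  case False
  have "x * (\<Prod>y\<in>UNIV-{0}. x * y) = x * x ^ (card (UNIV :: 'a set) - 1) * \<Prod>(UNIV-{0})"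
    by (simp add: prod.distrib mult_ac)
  also have "x * x ^ (card (UNIV :: 'a set) - 1) = x ^ Suc (card (UNIV :: 'a set) - 1)"
    by (subst power_Suc) auto
  also have "Suc (card (UNIV :: 'a set) - 1) = card (UNIV :: 'a set)"
    using finite_UNIV_card_ge_0[where ?'a = 'a] by simp
  also have "(\<Prod>y\<in>UNIV-{0}. x * y) = (\<Prod>y\<in>UNIV-{0}. y)"
    by (rule prod.reindex_bij_witness[of _ "\<lambda>y. y / x" "\<lambda>y. x * y"]) (use False in auto)
  finally show ?thesis
    by simp
qed (use finite_UNIV_card_ge_0[where ?'a = 'a] in auto)

lemma abs_trace_alt:
  assumes char: "CHAR('q::{finite,field}) = CARD('p::prime_card)"
  shows "abs_trace_q (x::'q) = (\<Sum>i<ext_deg TYPE('q). x ^ (CARD('p) ^ i))"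
  unfolding abs_trace_q_def char ..

lemma abs_trace_pow:
  assumes char: "CHAR('q::{finite,field}) = CARD('p::prime_card)"
  shows "abs_trace_q (x::'q) ^ CARD('p) = abs_trace_q x"
proof -
  let ?p = "CARD('p)" and ?m = "ext_deg TYPE('q)"
  have pr: "prime CHAR('q)" unfolding char by (rule prime_card)
  have "abs_trace_q x ^ ?p = (\<Sum>i<?m. (x ^ (?p ^ i)) ^ ?p)"
    unfolding abs_trace_alt[OF char] by (rule freshmans_dream_sum) (use pr char in auto)
  also have "\<dots> = (\<Sum>i<?m. x ^ (?p ^ Suc i))"
    by (simp add: power_mult[symmetric] mult.commute)
  also have "\<dots> = (\<Sum>i<Suc ?m. x ^ (?p ^ i)) - x"
    by (subst sum.lessThan_Suc_shift) simp
  also have "\<dots> = (\<Sum>i<?m. x ^ (?p ^ i)) + x ^ (?p ^ ?m) - x"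
    by simp
  also have "x ^ (?p ^ ?m) = x" using pow_card_same[of x] ext_deg_eq[OF char] by simp
  finally show ?thesis unfolding abs_trace_alt[OF char] by simp
qed

lemma fixed_in_range_emb:
  assumes char: "CHAR('q::{finite,field}) = CARD('p::prime_card)"
    and y: "(y::'q) ^ CARD('p) = y"
  shows "y \<in> range (emb :: 'p mod_ring \<Rightarrow> 'q)"
proof -
  let ?p = "CARD('p)"
  have p2: "?p \<ge> 2" using prime_ge_2_nat[OF prime_card] .
  define P :: "'q poly" where "P = monom 1 ?p - monom 1 1"
  have cP: "coeff P ?p = 1" unfolding P_def using p2 by (simp add: coeff_monom)
  have P0: "P \<noteq> 0" using cP by auto
  have dP: "degree P \<le> ?p" unfolding P_def
    by (rule degree_le) (use p2 in \<open>auto simp: coeff_monom\<close>)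
  have R: "{x. poly P x = 0} = {x. x ^ ?p = x}" unfolding P_def by (auto simp: poly_monom)
  have cardR: "card {x::'q. x ^ ?p = x} \<le> ?p"
    using poly_roots_degree[OF P0] dP R by simp
  have sub: "range (emb :: 'p mod_ring \<Rightarrow> 'q) \<subseteq> {x. x ^ ?p = x}"
    using emb_pow_p[OF char, of _ 1] by auto
  have "card (range (emb :: 'p mod_ring \<Rightarrow> 'q)) = ?p"
    using card_image[OF inj_emb[OF char]] by simp
  then have "range (emb :: 'p mod_ring \<Rightarrow> 'q) = {x. x ^ ?p = x}"
    using card_subset_eq[OF _ sub] cardR by (metis card_mono finite le_antisym sub)
  then show ?thesis using y by auto
qed

lemma emb_Tr:
  assumes char: "CHAR('q::{finite,field}) = CARD('p::prime_card)"
  shows "emb (Tr (x::'q) :: 'p mod_ring) = abs_trace_q x"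
proof -
  obtain b :: "'p mod_ring" where b: "emb b = abs_trace_q x"
    using fixed_in_range_emb[OF char abs_trace_pow[OF char]] by (metis rangeE)
  have "\<exists>!b :: 'p mod_ring. emb b = abs_trace_q x"
    using b emb_inj[OF char] by metis
  then have "emb (THE b :: 'p mod_ring. emb b = abs_trace_q x) = abs_trace_q x" by (rule theI')
  then show ?thesis unfolding Tr_def .
qed

lemma abs_trace_add:
  assumes char: "CHAR('q::{finite,field}) = CARD('p::prime_card)"
  shows "abs_trace_q ((x::'q) + y) = abs_trace_q x + abs_trace_q y"
proof -
  have pr: "prime CHAR('q)" unfolding char by (rule prime_card)
  show ?thesis unfolding abs_trace_q_def
    by (simp add: freshmans_dream'[OF pr] sum.distrib)
qed

lemma abs_trace_scale:
  assumes char: "CHAR('q::{finite,field}) = CARD('p::prime_card)"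
  shows "abs_trace_q (emb (a :: 'p mod_ring) * (x::'q)) = emb a * abs_trace_q x"
  unfolding abs_trace_alt[OF char]
  by (simp add: power_mult_distrib emb_pow_p[OF char] sum_distrib_left)

lemma Tr_add:
  assumes char: "CHAR('q::{finite,field}) = CARD('p::prime_card)"
  shows "(Tr ((x::'q) + y) :: 'p mod_ring) = Tr x + Tr y"
  by (rule emb_inj[OF char]) (simp add: emb_add[OF char] emb_Tr[OF char] abs_trace_add[OF char])

lemma Tr_scale:
  assumes char: "CHAR('q::{finite,field}) = CARD('p::prime_card)"
  shows "(Tr (emb (a :: 'p mod_ring) * (x::'q)) :: 'p mod_ring) = a * Tr x"
  by (rule emb_inj[OF char]) (simp add: emb_mult[OF char] emb_Tr[OF char] abs_trace_scale[OF char])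

lemma abs_trace_nonzero:
  assumes char: "CHAR('q::{finite,field}) = CARD('p::prime_card)"
  shows "\<exists>x::'q. abs_trace_q x \<noteq> 0"
proof (rule ccontr)
  assume "\<not> (\<exists>x::'q. abs_trace_q x \<noteq> 0)"
  then have all0: "\<And>x::'q. abs_trace_q x = 0" by simp
  let ?p = "CARD('p)" and ?m = "ext_deg TYPE('q)"
  have p2: "?p \<ge> 2" using prime_ge_2_nat[OF prime_card] .
  have m0: "?m > 0" by (rule ext_deg_pos[OF char])
  define Q :: "'q poly" where "Q = (\<Sum>i<?m. monom 1 (?p ^ i))"
  have cQ: "coeff Q j = (\<Sum>i<?m. if ?p ^ i = j then 1 else 0)" for j
    unfolding Q_def by (simp add: coeff_sum coeff_monom)
  have "coeff Q (?p ^ (?m - 1)) = (\<Sum>i<?m. if i = ?m - 1 then 1 else 0)"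
    unfolding cQ using p2 by (intro sum.cong refl) (simp add: power_inject_exp)
  also have "\<dots> = 1" using m0 by simp
  finally have cQ1: "coeff Q (?p ^ (?m - 1)) = 1" .
  have Q0: "Q \<noteq> 0" using cQ1 by auto
  have dQ: "degree Q \<le> ?p ^ (?m - 1)"
  proof (rule degree_le, intro allI impI)
    fix j assume j: "?p ^ (?m - 1) < j"
    have "?p ^ i \<noteq> j" if "i < ?m" for i
    proof -
      have "?p ^ i \<le> ?p ^ (?m - 1)" using that p2 by (intro power_increasing) auto
      then show ?thesis using j by simp
    qed
    then show "coeff Q j = 0" unfolding cQ by (intro sum.neutral) auto
  qed
  have "poly Q x = abs_trace_q x" for x
    unfolding Q_def abs_trace_alt[OF char] by (simp add: poly_sum poly_monom)
  then have "{x. poly Q x = 0} = UNIV" using all0 by auto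
  then have "CARD('q) \<le> ?p ^ (?m - 1)" using poly_roots_degree[OF Q0] dQ by simp
  moreover have "?p ^ (?m - 1) < ?p ^ ?m" using p2 m0 by (intro power_strict_increasing) auto
  ultimately show False using ext_deg_eq[OF char] by simp
qed

lemma Tr_one_exists:
  assumes char: "CHAR('q::{finite,field}) = CARD('p::prime_card)"
  shows "\<exists>y::'q. (Tr y :: 'p mod_ring) = 1"
proof -
  obtain x :: 'q where x: "abs_trace_q x \<noteq> 0" using abs_trace_nonzero[OF char] by blast
  have t0: "(Tr x :: 'p mod_ring) \<noteq> 0"
  proof
    assume "(Tr x :: 'p mod_ring) = 0"
    then have "emb (Tr x :: 'p mod_ring) = (0::'q)" by simp
    with x emb_Tr[OF char, of x] show False by simp
  qed
  have "(Tr (emb (inverse (Tr x :: 'p mod_ring)) * x) :: 'p mod_ring) = 1"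
    using t0 by (simp add: Tr_scale[OF char])
  then show ?thesis by blast
qed

lemma Tr_uminus:
  assumes char: "CHAR('q::{finite,field}) = CARD('p::prime_card)"
  shows "(Tr (- (x::'q)) :: 'p mod_ring) = - Tr x"
  using Tr_scale[OF char, of "-1" x] by (simp add: emb_uminus[OF char])

lemma Tr_zero:
  assumes char: "CHAR('q::{finite,field}) = CARD('p::prime_card)"
  shows "(Tr (0::'q) :: 'p mod_ring) = 0"
  using Tr_scale[OF char, of 0 0] by simp

definition omega :: "'p::prime_card itself \<Rightarrow> complex" where
  "omega _ = exp (2 * of_real pi * \<i> / of_nat CARD('p))"

lemma to_int_of_nat_mod_ring:
  "to_int_mod_ring (of_nat n :: 'a::nontriv mod_ring) = int (n mod CARD('a))"
  unfolding of_nat_of_int_mod_ring o_def by transfer (simp add: zmod_int)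

lemma omega_pow_card: "omega TYPE('p::prime_card) ^ CARD('p) = 1"
proof -
  have "omega TYPE('p) ^ CARD('p) = exp (of_nat CARD('p) * (2 * of_real pi * \<i> / of_nat CARD('p)))"
    unfolding omega_def by (rule exp_of_nat_mult[symmetric])
  also have "\<dots> = exp (2 * of_real pi * \<i>)" by simp
  finally show ?thesis by simp
qed

lemma omega_pow_mod: "omega TYPE('p::prime_card) ^ (n mod CARD('p)) = omega TYPE('p) ^ n"
proof -
  have e: "CARD('p) * (n div CARD('p)) + n mod CARD('p) = n" by (rule mult_div_mod_eq)
  have "omega TYPE('p) ^ n = omega TYPE('p) ^ (CARD('p) * (n div CARD('p)) + n mod CARD('p))"
    by (simp only: e)
  also have "\<dots> = omega TYPE('p) ^ (n mod CARD('p))"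
    by (simp only: power_add power_mult omega_pow_card power_one mult_1)
  finally show ?thesis by (rule sym)
qed

lemma zeta_pow_of_nat: "zeta_pow (of_nat n :: 'p::prime_card mod_ring) = omega TYPE('p) ^ n"
proof -
  have "zeta_pow (of_nat n :: 'p mod_ring) = exp (of_nat (n mod CARD('p)) * (2 * of_real pi * \<i> / of_nat CARD('p)))"
    unfolding zeta_pow_def to_int_of_nat_mod_ring by (simp add: field_simps)
  also have "\<dots> = omega TYPE('p) ^ (n mod CARD('p))"
    unfolding omega_def by (rule exp_of_nat_mult)
  finally show ?thesis using omega_pow_mod by simp
qed

lemma zeta_pow_add: "zeta_pow (a + b :: 'p::prime_card mod_ring) = zeta_pow a * zeta_pow b"
proof -
  obtain k where k: "a = of_nat k" using surj_of_nat_mod_ring by blast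
  obtain l where l: "b = of_nat l" using surj_of_nat_mod_ring by blast
  have "zeta_pow (a + b) = zeta_pow (of_nat (k + l) :: 'p mod_ring)" using k l by simp
  also have "\<dots> = omega TYPE('p) ^ k * omega TYPE('p) ^ l"
    unfolding zeta_pow_of_nat by (simp add: power_add)
  also have "\<dots> = zeta_pow a * zeta_pow b" unfolding k l zeta_pow_of_nat ..
  finally show ?thesis .
qed

lemma zeta_pow_0 [simp]: "zeta_pow (0 :: 'p::prime_card mod_ring) = 1"
  using zeta_pow_of_nat[of 0, where 'p='p] by simp

lemma zeta_pow_1: "zeta_pow (1 :: 'p::prime_card mod_ring) = omega TYPE('p)"
  using zeta_pow_of_nat[of 1, where 'p='p] by simp

lemma omega_pow_ne_1:
  assumes "0 < j" "j < CARD('p::prime_card)"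
  shows "omega TYPE('p) ^ j \<noteq> 1"
proof
  assume eq: "omega TYPE('p) ^ j = 1"
  have "omega TYPE('p) ^ j = exp (of_nat j * (2 * of_real pi * \<i> / of_nat CARD('p)))"
    unfolding omega_def by (rule exp_of_nat_mult[symmetric])
  also have "of_nat j * (2 * of_real pi * \<i> / of_nat CARD('p)) = \<i> * of_real (2 * pi * j / CARD('p))"
    by (simp add: field_simps)
  finally have "exp (\<i> * of_real (2 * pi * j / CARD('p))) = 1" using eq by simp
  then obtain n :: int where n: "2 * pi * j / CARD('p) = of_int (2 * n) * pi"
    unfolding exp_eq_1 by auto
  have "real j / CARD('p) = of_int n" using n by (simp add: field_simps)
  then have "real j = of_int n * CARD('p)" using assms by (simp add: field_simps)
  then have jn: "int j = n * int CARD('p)" by (metis of_int_eq_iff of_int_mult of_int_of_nat_eq)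
  show False
  proof (cases "n \<le> 0")
    case True then have "n * int CARD('p) \<le> 0" by (simp add: mult_nonpos_nonneg)
    then show False using jn assms by simp
  next
    case False then have "n * int CARD('p) \<ge> int CARD('p)" by simp
    moreover have "int j < int CARD('p)" using assms by simp
    ultimately show False using jn by linarith
  qed
qed

lemma zeta_pow_inj:
  assumes "zeta_pow (a :: 'p::prime_card mod_ring) = zeta_pow b"
  shows "a = b"
proof (rule ccontr)
  assume ne: "a \<noteq> b"
  obtain k where k: "a - b = of_nat k" "k < CARD('p)" using surj_of_nat_mod_ring by blast
  have "k \<noteq> 0"
  proof
    assume "k = 0"
    then have "a - b = 0" using k by simp
    then show False using ne by simp
  qed
  have "zeta_pow a = zeta_pow (a - b) * zeta_pow b" using zeta_pow_add[of "a - b" b] by simp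
  then have "zeta_pow (a - b) = 1" using assms
    by (metis mult_cancel_right2 zeta_pow_0 zeta_pow_add diff_add_cancel add_0 mult_1)
  then have "omega TYPE('p) ^ k = 1" using k zeta_pow_of_nat by metis
  then show False using omega_pow_ne_1 \<open>k \<noteq> 0\<close> k by blast
qed

lemma omega_ne_1: "omega TYPE('p::prime_card) \<noteq> 1"
  using omega_pow_ne_1[of 1, where 'p='p] prime_ge_2_nat[OF prime_card[where 'a='p]] by simp

lemma sum_zeta_pow: "(\<Sum>c\<in>UNIV. zeta_pow (c :: 'p::prime_card mod_ring)) = 0"
proof -
  let ?S = "\<Sum>c\<in>UNIV. zeta_pow (c :: 'p mod_ring)"
  have "?S = (\<Sum>c\<in>UNIV. zeta_pow (c + 1 :: 'p mod_ring))"
    by (rule sum.reindex_bij_witness[of _ "\<lambda>c. c + 1" "\<lambda>c. c - 1"]) auto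
  also have "\<dots> = omega TYPE('p) * ?S"
    by (simp add: zeta_pow_add zeta_pow_1 sum_distrib_left mult.commute)
  finally have "(1 - omega TYPE('p)) * ?S = 0" by (simp add: algebra_simps)
  then show ?thesis using omega_ne_1[where 'p='p] by simp
qed

lemma sum_zeta_Tr:
  assumes char: "CHAR('q::{finite,field}) = CARD('p::prime_card)"
  shows "(\<Sum>y\<in>UNIV. zeta_pow (Tr (y::'q) :: 'p mod_ring)) = 0"
proof -
  obtain y0 :: 'q where y0: "(Tr y0 :: 'p mod_ring) = 1" using Tr_one_exists[OF char] by blast
  let ?S = "\<Sum>y\<in>UNIV. zeta_pow (Tr (y::'q) :: 'p mod_ring)"
  have "?S = (\<Sum>y\<in>UNIV. zeta_pow (Tr (y + y0) :: 'p mod_ring))"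
    by (rule sum.reindex_bij_witness[of _ "\<lambda>y. y + y0" "\<lambda>y. y - y0"]) auto
  also have "\<dots> = omega TYPE('p) * ?S"
    by (simp add: Tr_add[OF char] y0 zeta_pow_add zeta_pow_1 sum_distrib_left mult.commute)
  finally have "(1 - omega TYPE('p)) * ?S = 0" by (simp add: algebra_simps)
  then show ?thesis using omega_ne_1[where 'p='p] by simp
qed

lemma orth:
  assumes char: "CHAR('q::{finite,field}) = CARD('p::prime_card)"
  shows "(\<Sum>b\<in>UNIV. zeta_pow (Tr (b * (w::'q)) :: 'p mod_ring)) = (if w = 0 then of_nat CARD('q) else 0)"
proof (cases "w = 0")
  case True then show ?thesis by (simp add: Tr_zero[OF char])
next
  case False
  have "(\<Sum>b\<in>UNIV. zeta_pow (Tr (b * w) :: 'p mod_ring)) = (\<Sum>y\<in>UNIV. zeta_pow (Tr (y::'q) :: 'p mod_ring))"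
    by (rule sum.reindex_bij_witness[of _ "\<lambda>y. y / w" "\<lambda>b. b * w"]) (use False in auto)
  then show ?thesis using sum_zeta_Tr[OF char] False by simp
qed

definition FT :: "'p::prime_card itself \<Rightarrow> ('q::{finite,field} \<Rightarrow> complex) \<Rightarrow> 'q \<Rightarrow> complex" where
  "FT _ g b = (\<Sum>x\<in>UNIV. g x * zeta_pow (Tr (b * x) :: 'p mod_ring))"

lemma emb_inverse_cancel:
  assumes char: "CHAR('q::{finite,field}) = CARD('p::prime_card)" and a: "(a::'p mod_ring) \<noteq> 0"
  shows "(emb a :: 'q) * emb (inverse a) = 1"
  using a by (simp add: emb_mult[OF char, symmetric])

lemma emb_nonzero:
  assumes char: "CHAR('q::{finite,field}) = CARD('p::prime_card)" and a: "(a::'p mod_ring) \<noteq> 0"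
  shows "(emb a :: 'q) \<noteq> 0"
  using emb_inverse_cancel[OF char a] by auto

lemma Tr_diff:
  assumes char: "CHAR('q::{finite,field}) = CARD('p::prime_card)"
  shows "(Tr ((x::'q) - y) :: 'p mod_ring) = Tr x - Tr y"
  using Tr_add[OF char, of x "-y"] Tr_uminus[OF char, of y] by simp

lemma zeta_pow_diff: "zeta_pow (a - b :: 'p::prime_card mod_ring) = zeta_pow a * zeta_pow (- b)"
  using zeta_pow_add[of a "-b"] by simp

lemma FT_inversion:
  assumes char: "CHAR('q::{finite,field}) = CARD('p::prime_card)"
  shows "(\<Sum>b\<in>UNIV. FT TYPE('p) g b * zeta_pow (- Tr (b * y) :: 'p mod_ring)) = of_nat CARD('q) * g (y::'q)"
proof -
  have step: "zeta_pow (Tr (b * x) :: 'p mod_ring) * zeta_pow (- Tr (b * y) :: 'p mod_ring)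
      = zeta_pow (Tr (b * (x - y)) :: 'p mod_ring)" for b x :: 'q
  proof -
    have "b * (x - y) = b * x - b * y" by (simp add: algebra_simps)
    then have "(Tr (b * (x - y)) :: 'p mod_ring) = Tr (b * x) - Tr (b * y)"
      by (simp add: Tr_diff[OF char])
    then show ?thesis by (simp add: zeta_pow_diff)
  qed
  have "(\<Sum>b\<in>UNIV. FT TYPE('p) g b * zeta_pow (- Tr (b * y) :: 'p mod_ring))
      = (\<Sum>b\<in>UNIV. \<Sum>x\<in>UNIV. g x * zeta_pow (Tr (b * (x - y)) :: 'p mod_ring))"
    unfolding FT_def sum_distrib_right by (simp add: mult.assoc step)
  also have "\<dots> = (\<Sum>x\<in>UNIV. g x * (\<Sum>b\<in>UNIV. zeta_pow (Tr (b * (x - y)) :: 'p mod_ring)))"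
    by (subst sum.swap) (simp add: sum_distrib_left)
  also have "\<dots> = (\<Sum>x\<in>UNIV. g x * (if x - y = 0 then of_nat CARD('q) else 0))"
    by (simp add: orth[OF char])
  also have "\<dots> = (\<Sum>x\<in>UNIV. if x = y then g x * of_nat CARD('q) else 0)"
    by (intro sum.cong) auto
  also have "\<dots> = of_nat CARD('q) * g y" by (simp add: mult.commute)
  finally show ?thesis .
qed

lemma FT_invariant_imp:
  assumes char: "CHAR('q::{finite,field}) = CARD('p::prime_card)" and a: "(a::'p mod_ring) \<noteq> 0"
    and inv: "\<And>b. FT TYPE('p) g (emb a * b) = FT TYPE('p) g b"
  shows "g (emb a * y) = g (y::'q)"
proof -
  have q0: "(of_nat CARD('q) :: complex) \<noteq> 0" by simp
  have "of_nat CARD('q) * g (emb a * y) = (\<Sum>b\<in>UNIV. FT TYPE('p) g b * zeta_pow (- Tr (b * (emb a * y)) :: 'p mod_ring))"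
    by (rule FT_inversion[OF char, symmetric])
  also have "\<dots> = (\<Sum>b\<in>UNIV. FT TYPE('p) g (emb a * b) * zeta_pow (- Tr ((emb a * b) * y) :: 'p mod_ring))"
    by (intro sum.cong refl, simp only: inv, simp add: mult_ac)
  also have "\<dots> = (\<Sum>b\<in>UNIV. FT TYPE('p) g b * zeta_pow (- Tr (b * y) :: 'p mod_ring))"
    by (rule sum.reindex_bij_witness[of _ "\<lambda>b. emb (inverse a) * b" "\<lambda>b. emb a * b"])
       (auto simp: mult.assoc[symmetric] emb_inverse_cancel[OF char a] mult.commute[of "emb (inverse a)" "emb a"])
  also have "\<dots> = of_nat CARD('q) * g y" by (rule FT_inversion[OF char])
  finally show ?thesis using q0 by simp
qed

lemma imp_FT_invariant:
  assumes char: "CHAR('q::{finite,field}) = CARD('p::prime_card)" and a: "(a::'p mod_ring) \<noteq> 0"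
    and inv: "\<And>x. g (emb a * x) = g (x::'q)"
  shows "FT TYPE('p) g (emb a * b) = FT TYPE('p) g b"
proof -
  have "FT TYPE('p) g (emb a * b) = (\<Sum>x\<in>UNIV. g (emb a * x) * zeta_pow (Tr (b * (emb a * x)) :: 'p mod_ring))"
    unfolding FT_def by (intro sum.cong refl, simp only: inv, simp add: mult_ac)
  also have "\<dots> = FT TYPE('p) g b"
    unfolding FT_def
    by (rule sum.reindex_bij_witness[of _ "\<lambda>x. emb (inverse a) * x" "\<lambda>x. emb a * x"])
       (auto simp: mult.assoc[symmetric] emb_inverse_cancel[OF char a] mult.commute[of "emb (inverse a)" "emb a"])
  finally show ?thesis .
qed

lemma walsh_FT:
  fixes f :: "'q::{finite,field} \<Rightarrow> 'p::prime_card mod_ring"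
  assumes char: "CHAR('q::{finite,field}) = CARD('p::prime_card)"
  shows "walsh f b = FT TYPE('p) (\<lambda>x. zeta_pow (f x)) (- (b::'q))"
  unfolding walsh_def FT_def
  by (intro sum.cong refl) (simp add: Tr_uminus[OF char] zeta_pow_diff)

lemma chi_FT:
  "chi TYPE('p::prime_card) b D = FT TYPE('p) (\<lambda>x. if x \<in> D then 1 else 0) (b::'q::{finite,field})"
proof -
  have "FT TYPE('p) (\<lambda>x. if x \<in> D then 1 else 0) b = (\<Sum>x\<in>UNIV. if x \<in> D then zeta_pow (Tr (b * x) :: 'p mod_ring) else 0)"
    unfolding FT_def by (intro sum.cong) auto
  also have "\<dots> = (\<Sum>x\<in>{x\<in>UNIV. x \<in> D}. zeta_pow (Tr (b * x) :: 'p mod_ring))"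
    by (rule sum.inter_filter[symmetric]) simp
  also have "\<dots> = chi TYPE('p) b D" unfolding chi_def by simp
  finally show ?thesis ..
qed

definition cnt :: "'q::{finite,field} set \<Rightarrow> 'q \<Rightarrow> 'p::prime_card mod_ring \<Rightarrow> nat" where
  "cnt D b c = card {x\<in>D. Tr (b * x) = c}"

lemma chi_sum:
  "chi TYPE('p::prime_card) b D = (\<Sum>c\<in>UNIV. of_nat (cnt D (b::'q::{finite,field}) c) * zeta_pow (c :: 'p mod_ring))"
proof -
  have "(\<Sum>c\<in>UNIV. of_nat (cnt D b c) * zeta_pow (c :: 'p mod_ring))
      = (\<Sum>c\<in>UNIV. \<Sum>x\<in>D. if Tr (b * x) = c then zeta_pow (c :: 'p mod_ring) else 0)"
  proof (rule sum.cong[OF refl])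
    fix c :: "'p mod_ring"
    have "of_nat (cnt D b c) * zeta_pow c = (\<Sum>x\<in>{x\<in>D. Tr (b * x) = c}. zeta_pow c)"
      unfolding cnt_def by simp
    also have "\<dots> = (\<Sum>x\<in>D. if Tr (b * x) = c then zeta_pow c else 0)"
      by (rule sum.inter_filter) simp
    finally show "of_nat (cnt D b c) * zeta_pow c = (\<Sum>x\<in>D. if Tr (b * x) = c then zeta_pow c else 0)" .
  qed
  also have "\<dots> = (\<Sum>x\<in>D. \<Sum>c\<in>UNIV. if Tr (b * x) = c then zeta_pow (c :: 'p mod_ring) else 0)"
    by (rule sum.swap)
  also have "\<dots> = chi TYPE('p) b D"
    unfolding chi_def by (intro sum.cong refl) simp
  finally show ?thesis ..
qed

lemma reindex_p:
  "(\<Sum>c\<in>UNIV. F c) = (\<Sum>k<CARD('p::prime_card). F (of_nat k :: 'p mod_ring))"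
proof -
  have "bij_betw (of_nat :: nat \<Rightarrow> 'p mod_ring) {..<CARD('p)} UNIV"
  proof (rule bij_betw_imageI)
    show "inj_on (of_nat :: nat \<Rightarrow> 'p mod_ring) {..<CARD('p)}"
    proof (rule inj_onI)
      fix k l assume k: "k \<in> {..<CARD('p)}" and l: "l \<in> {..<CARD('p)}"
        and eq: "(of_nat k :: 'p mod_ring) = of_nat l"
      have "to_int_mod_ring (of_nat k :: 'p mod_ring) = to_int_mod_ring (of_nat l :: 'p mod_ring)"
        using eq by simp
      then show "k = l" using k l by (simp add: to_int_of_nat_mod_ring)
    qed
    show "(of_nat :: nat \<Rightarrow> 'p mod_ring) ` {..<CARD('p)} = UNIV"
      using surj_of_nat_mod_ring by fastforce
  qed
  then show ?thesis by (rule sum.reindex_bij_betw[symmetric])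
qed

lemma chi_int_imp_const:
  assumes n: "chi TYPE('p::prime_card) b D = of_int n" and c: "(c :: 'p mod_ring) \<noteq> 0"
  shows "cnt D (b::'q::{finite,field}) c = cnt D b (1 :: 'p mod_ring)"
proof -
  let ?p = "CARD('p)"
  have p2: "?p \<ge> 2" using prime_ge_2_nat[OF prime_card] .
  define M where "M k = cnt D b (of_nat k :: 'p mod_ring)" for k
  define a where "a k = int (M k) - (if k = 0 then n else 0)" for k
  have chiM: "chi TYPE('p) b D = (\<Sum>k<?p. of_nat (M k) * omega TYPE('p) ^ k)"
    unfolding chi_sum reindex_p M_def by (simp add: zeta_pow_of_nat)
  have eqk: "of_int (a k) * omega TYPE('p) ^ k = of_nat (M k) * omega TYPE('p) ^ k - (if k = 0 then (of_int n :: complex) else 0)" for k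
    by (cases "k = 0") (simp_all add: a_def algebra_simps)
  have "(\<Sum>k<?p. of_int (a k) * omega TYPE('p) ^ k)
      = (\<Sum>k<?p. of_nat (M k) * omega TYPE('p) ^ k) - (\<Sum>k<?p. if k = 0 then of_int n else 0)"
    by (simp only: eqk sum_subtractf)
  also have "(\<Sum>k<?p. if k = 0 then (of_int n :: complex) else 0) = of_int n"
    using p2 by (simp add: sum.delta)
  finally have "(\<Sum>k<?p. of_int (a k) * omega TYPE('p) ^ k) = 0"
    using chiM n by simp
  then have all: "\<forall>k<?p. a k = a 0"
    by (rule cyc_LI[OF omega_pow_card omega_ne_1])
  obtain k where k: "c = of_nat k" "k < ?p" using surj_of_nat_mod_ring by blast
  have k0: "k \<noteq> 0"
  proof
    assume "k = 0" then show False using k c by simp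
  qed
  have ak: "a k = a 0" using all k(2) by blast
  have "1 < ?p" using p2 by simp
  then have a1: "a 1 = a 0" using all by blast
  have "int (M k) = int (M 1)" using ak a1 k0 unfolding a_def by simp
  then show ?thesis unfolding M_def using k by simp
qed

lemma chi_const:
  assumes const: "\<And>c. c \<noteq> 0 \<Longrightarrow> cnt D (b::'q::{finite,field}) (c :: 'p::prime_card mod_ring) = cnt D b (1 :: 'p mod_ring)"
  shows "chi TYPE('p) b D = of_nat (cnt D b (0 :: 'p mod_ring)) - of_nat (cnt D b (1 :: 'p mod_ring))"
proof -
  have "chi TYPE('p) b D = of_nat (cnt D b (0 :: 'p mod_ring)) * zeta_pow (0 :: 'p mod_ring)
      + (\<Sum>c\<in>UNIV - {0}. of_nat (cnt D b c) * zeta_pow (c :: 'p mod_ring))"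
    unfolding chi_sum by (subst sum.remove[of UNIV 0]) auto
  also have "(\<Sum>c\<in>UNIV - {0}. of_nat (cnt D b c) * zeta_pow (c :: 'p mod_ring))
      = of_nat (cnt D b (1 :: 'p mod_ring)) * (\<Sum>c\<in>UNIV - {0}. zeta_pow (c :: 'p mod_ring))"
  proof -
    have "(\<Sum>c\<in>UNIV - {0}. of_nat (cnt D b c) * zeta_pow (c :: 'p mod_ring))
        = (\<Sum>c\<in>UNIV - {0}. of_nat (cnt D b (1 :: 'p mod_ring)) * zeta_pow (c :: 'p mod_ring))"
    proof (rule sum.cong[OF refl])
      fix x :: "'p mod_ring" assume "x \<in> UNIV - {0}"
      then have "x \<noteq> 0" by simp
      then have "cnt D b x = cnt D b (1 :: 'p mod_ring)" by (rule const)
      then show "of_nat (cnt D b x) * zeta_pow x = of_nat (cnt D b (1 :: 'p mod_ring)) * zeta_pow x" by simp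
    qed
    then show ?thesis by (simp only: sum_distrib_left)
  qed
  also have "(\<Sum>c\<in>UNIV - {0}. zeta_pow (c :: 'p mod_ring)) = - 1"
    using sum_zeta_pow[where 'p='p] sum.remove[of UNIV 0 "zeta_pow :: 'p mod_ring \<Rightarrow> complex"]
    by (simp add: eq_neg_iff_add_eq_0 add.commute[of 1])
  finally show ?thesis by simp
qed

lemma cnt_scale:
  assumes char: "CHAR('q::{finite,field}) = CARD('p::prime_card)" and a: "(a :: 'p mod_ring) \<noteq> 0"
  shows "cnt D (emb a * b) c = cnt D (b::'q) (c / a)"
proof -
  have e1: "(Tr (emb a * b * x) :: 'p mod_ring) = a * Tr (b * x)" for x
    by (simp only: mult.assoc Tr_scale[OF char])
  have e2: "(a * t = c) \<longleftrightarrow> (t = c / a)" for t using a by (auto simp: field_simps)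
  have "{x\<in>D. (Tr (emb a * b * x) :: 'p mod_ring) = c} = {x\<in>D. Tr (b * x) = c / a}"
    by (simp only: e1 e2)
  then show ?thesis unfolding cnt_def by simp
qed

lemma cnt_invariant:
  assumes char: "CHAR('q::{finite,field}) = CARD('p::prime_card)" and a: "(a :: 'p mod_ring) \<noteq> 0"
    and D: "scale_set a D = D"
  shows "cnt D (b::'q) (a * c) = cnt D b c"
proof -
  have trs: "(Tr (b * (emb a * y)) :: 'p mod_ring) = a * Tr (b * y)" for y
    by (simp only: mult.left_commute[of b] Tr_scale[OF char])
  have "{x\<in>D. (Tr (b * x) :: 'p mod_ring) = a * c} = (\<lambda>x. emb a * x) ` {x\<in>D. Tr (b * x) = c}"
  proof (intro equalityI subsetI)
    fix x assume x: "x \<in> {x\<in>D. (Tr (b * x) :: 'p mod_ring) = a * c}"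
    then have "x \<in> scale_set a D" using D by simp
    then obtain d where d: "d \<in> D" "x = emb a * d" unfolding scale_set_def by blast
    have "a * Tr (b * d) = a * c" using x d by (simp add: trs)
    then have "Tr (b * d) = c" using a by simp
    then show "x \<in> (\<lambda>x. emb a * x) ` {x\<in>D. Tr (b * x) = c}" using d by blast
  next
    fix x assume "x \<in> (\<lambda>x. emb a * x) ` {x\<in>D. (Tr (b * x) :: 'p mod_ring) = c}"
    then obtain d where d: "d \<in> D" "Tr (b * d) = c" "x = emb a * d" by blast
    have "x \<in> scale_set a D" unfolding scale_set_def using d by blast
    then have "x \<in> D" using D by simp
    moreover have "(Tr (b * x) :: 'p mod_ring) = a * c" using d by (simp add: trs)
    ultimately show "x \<in> {x\<in>D. (Tr (b * x) :: 'p mod_ring) = a * c}" by simp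
  qed
  moreover have "inj_on (\<lambda>x. emb a * x) {x\<in>D. (Tr (b * x) :: 'p mod_ring) = c}"
    by (rule inj_onI) (use emb_nonzero[OF char a] in simp)
  ultimately show ?thesis unfolding cnt_def by (simp add: card_image)
qed

theorem lemma4p4:
  fixes f :: "'q::{finite,field} \<Rightarrow> 'p::prime_card mod_ring"
  assumes char: "CHAR('q) = CARD('p)"
  defines "C1 \<equiv> (\<forall>(a::'p mod_ring) x. a \<noteq> 0 \<longrightarrow> f (emb a * x) = f x)"
      and "C2 \<equiv> (\<forall>(a::'p mod_ring) \<beta>. a \<noteq> 0 \<longrightarrow> walsh f (emb a * \<beta>) = walsh f \<beta>)"
      and "C3 \<equiv> (\<forall>(a::'p mod_ring) i. a \<noteq> 0 \<longrightarrow> scale_set a (Dset f i) = Dset f i)"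
      and "C4 \<equiv> (\<forall>i \<beta>. chi TYPE('p) \<beta> (Dset f i) \<in> \<int>)"
  shows "(C1 \<longleftrightarrow> C2) \<and> (C1 \<longleftrightarrow> C3) \<and> (C1 \<longleftrightarrow> C4)"
proof -
  let ?g = "\<lambda>x. zeta_pow (f x)"
  have C1_C3: "C3" if c1: "C1"
    unfolding C3_def
  proof (intro allI impI)
    fix a :: "'p mod_ring" and i assume a: "a \<noteq> 0"
    have ia: "inverse a \<noteq> 0" using a by simp
    show "scale_set a (Dset f i) = Dset f i"
    proof (intro equalityI subsetI)
      fix x assume "x \<in> scale_set a (Dset f i)"
      then obtain d where d: "d \<in> Dset f i" "x = emb a * d" unfolding scale_set_def by blast
      then show "x \<in> Dset f i" using c1 a unfolding C1_def Dset_def by auto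
    next
      fix x assume x: "x \<in> Dset f i"
      have "x = emb a * (emb (inverse a) * x)"
        by (simp add: mult.assoc[symmetric] emb_inverse_cancel[OF char a])
      moreover have "emb (inverse a) * x \<in> Dset f i"
        using x c1 ia unfolding C1_def Dset_def by auto
      ultimately show "x \<in> scale_set a (Dset f i)" unfolding scale_set_def by blast
    qed
  qed
  have C3_C1: "C1" if c3: "C3"
    unfolding C1_def
  proof (intro allI impI)
    fix a :: "'p mod_ring" and x :: 'q assume a: "a \<noteq> 0"
    have "emb a * x \<in> scale_set a (Dset f (f x))" unfolding scale_set_def Dset_def by blast
    then have "emb a * x \<in> Dset f (f x)" using c3 a unfolding C3_def by simp
    then show "f (emb a * x) = f x" unfolding Dset_def by simp
  qed
  have C1_C2: "C2" if c1: "C1"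
    unfolding C2_def
  proof (intro allI impI)
    fix a :: "'p mod_ring" and b :: 'q assume a: "a \<noteq> 0"
    have inv: "?g (emb a * x) = ?g x" for x using c1 a unfolding C1_def by simp
    have "walsh f (emb a * b) = FT TYPE('p) ?g (emb a * (- b))"
      unfolding walsh_FT[OF char] by simp
    also have "\<dots> = FT TYPE('p) ?g (- b)" by (rule imp_FT_invariant[OF char a, where g="\<lambda>x. zeta_pow (f x)", OF inv])
    also have "\<dots> = walsh f b" unfolding walsh_FT[OF char] ..
    finally show "walsh f (emb a * b) = walsh f b" .
  qed
  have C2_C1: "C1" if c2: "C2"
    unfolding C1_def
  proof (intro allI impI)
    fix a :: "'p mod_ring" and x :: 'q assume a: "a \<noteq> 0"
    have inv: "FT TYPE('p) ?g (emb a * b) = FT TYPE('p) ?g b" for b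
    proof -
      have "FT TYPE('p) ?g (emb a * b) = walsh f (emb a * (- b))"
        unfolding walsh_FT[OF char] by simp
      also have "\<dots> = walsh f (- b)" using c2 a unfolding C2_def by blast
      also have "\<dots> = FT TYPE('p) ?g b" unfolding walsh_FT[OF char] by simp
      finally show ?thesis .
    qed
    have "?g (emb a * x) = ?g x" by (rule FT_invariant_imp[OF char a, where g="\<lambda>x. zeta_pow (f x)", OF inv])
    then show "f (emb a * x) = f x" by (rule zeta_pow_inj)
  qed
  have C1_C4: "C4" if c1: "C1"
    unfolding C4_def
  proof (intro allI)
    fix i :: "'p mod_ring" and b :: 'q
    have c3: "C3" by (rule C1_C3[OF c1])
    have const: "cnt (Dset f i) b c = cnt (Dset f i) b (1 :: 'p mod_ring)" if c: "(c :: 'p mod_ring) \<noteq> 0" for c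
    proof -
      have "scale_set c (Dset f i) = Dset f i" using c3 c unfolding C3_def by blast
      from cnt_invariant[OF char c this, of b 1] show ?thesis by simp
    qed
    have "chi TYPE('p) b (Dset f i) = of_nat (cnt (Dset f i) b (0 :: 'p mod_ring)) - of_nat (cnt (Dset f i) b (1 :: 'p mod_ring))"
      by (rule chi_const) (rule const)
    then show "chi TYPE('p) b (Dset f i) \<in> \<int>" by simp
  qed
  have C4_C1: "C1" if c4: "C4"
    unfolding C1_def
  proof (intro allI impI)
    fix a :: "'p mod_ring" and x :: 'q assume a: "a \<noteq> 0"
    define D where "D = Dset f (f x)"
    have const: "cnt D b c = cnt D b (1 :: 'p mod_ring)" if c: "(c :: 'p mod_ring) \<noteq> 0" for b c
    proof -
      have "chi TYPE('p) b D \<in> \<int>" using c4 unfolding C4_def D_def by blast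
      then obtain n where "chi TYPE('p) b D = of_int n" by (elim Ints_cases)
      from chi_int_imp_const[OF this c] show ?thesis .
    qed
    have chiD: "chi TYPE('p) b D = of_nat (cnt D b (0 :: 'p mod_ring)) - of_nat (cnt D b (1 :: 'p mod_ring))" for b
      by (rule chi_const) (rule const)
    let ?h = "\<lambda>y. if y \<in> D then (1::complex) else 0"
    have inv: "FT TYPE('p) ?h (emb a * b) = FT TYPE('p) ?h b" for b
    proof -
      have ia: "1 / a \<noteq> 0" using a by simp
      have "FT TYPE('p) ?h (emb a * b) = chi TYPE('p) (emb a * b) D" by (rule chi_FT[symmetric])
      also have "\<dots> = of_nat (cnt D b (0 / a)) - of_nat (cnt D b (1 / a))"
        unfolding chiD cnt_scale[OF char a] ..
      also have "cnt D b (1 / a) = cnt D b (1 :: 'p mod_ring)" by (rule const[OF ia])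
      also have "of_nat (cnt D b (0 / a)) - of_nat (cnt D b (1 :: 'p mod_ring)) = chi TYPE('p) b D"
        unfolding chiD by simp
      also have "\<dots> = FT TYPE('p) ?h b" by (rule chi_FT)
      finally show ?thesis .
    qed
    have "?h (emb a * x) = ?h x" by (rule FT_invariant_imp[OF char a, where g="\<lambda>y. if y \<in> D then (1::complex) else 0", OF inv])
    moreover have "x \<in> D" unfolding D_def Dset_def by simp
    ultimately have "emb a * x \<in> D" by (metis zero_neq_one)
    then show "f (emb a * x) = f x" unfolding D_def Dset_def by simp
  qed
  show ?thesis using C1_C2 C2_C1 C1_C3 C3_C1 C1_C4 C4_C1 by blast
qed

end
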